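(* For a random threshold graph $G$ on $n\ge1$ vertices and an integer $k$ with $0\le k\le n/2$, the matching number $\nu(G)$ satisfies $$P(\nu(G)=k)=\begin{cases}\left(\tfrac12\right)^{n-1}\binom{n}{k} & k<\tfrac n2,\\[4pt] \left(\tfrac12\right)^{n-1}\binom{n-1}{\lfloor\frac{n-1}{2}\rfloor} & k=\tfrac n2.\end{cases}$$
   Context: A threshold graph on $n\ge1$ vertices is built from a base vertex $v_0$ by successively adding $v_1,\dots,v_{n-1}$, each either isolated (adjacent to no earlier vertex) or dominating (adjacent to all earlier vertices); its creation sequence $\mathrm{seq}(G)=s_1\cdots s_{n-1}$ has $s_i=1$ if $v_i$ is dominating and $s_i=0$ otherwise, and each unlabeled threshold graph on $n$ vertices corresponds to exactly one binary string of length $n-1$. A random threshold graph on $n$ vertices is one whose creation sequence is uniformly distributed over all $2^{n-1}$ binary strings of length $n-1$. $\nu(G)$ denotes the maximum number of edges in a matching of $G$. *)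

theory Defs
  imports "HOL-Probability.Probability"
begin

text \<open>A threshold graph on n = length s + 1 vertices 0,...,n-1, built from the creation
  sequence s = s_1 ... s_{n-1} (s_i = s ! (i-1)): vertex j (1 <= j <= n-1) is dominating
  (adjacent to all earlier vertices i < j) iff s_j holds, and isolated otherwise.\<close>

definition thr_adj :: "bool list \<Rightarrow> nat \<Rightarrow> nat \<Rightarrow> bool" where
  "thr_adj s u v \<longleftrightarrow>
     (u < v \<and> v \<le> length s \<and> s ! (v - 1)) \<or> (v < u \<and> u \<le> length s \<and> s ! (u - 1))"

definition thr_edges :: "bool list \<Rightarrow> nat set set" where
  "thr_edges s = {{u, v} | u v. thr_adj s u v}"

definition is_matching :: "bool list \<Rightarrow> nat set set \<Rightarrow> bool" where
  "is_matching s M \<longleftrightarrow> M \<subseteq> thr_edges s \<and> (\<forall>e\<in>M. \<forall>e'\<in>M. e \<noteq> e' \<longrightarrow> e \<inter> e' = {})"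

definition matching_number :: "bool list \<Rightarrow> nat" where
  "matching_number s = Max (card ` {M. is_matching s M})"

definition random_threshold_seq :: "nat \<Rightarrow> bool list pmf" where
  "random_threshold_seq n = pmf_of_set {s. length s = n - 1}"

end

theory Submission
  imports Defs
begin

lemma adj_bound: "thr_adj s u v \<Longrightarrow> u \<le> length s \<and> v \<le> length s \<and> u \<noteq> v"
  unfolding thr_adj_def by auto

lemma edge_props: "e \<in> thr_edges s \<Longrightarrow> e \<subseteq> {0..length s} \<and> card e = 2"
  unfolding thr_edges_def using adj_bound by fastforce

lemma edge_fin: "e \<in> thr_edges s \<Longrightarrow> finite e"
  using edge_props by (metis card.infinite zero_neq_numeral)

lemma edges_fin: "finite (thr_edges s)"
proof -
  have "thr_edges s \<subseteq> Pow {0..length s}" using edge_props by blast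
  thus ?thesis by (rule finite_subset) simp
qed

lemma matchings_fin: "finite {M. is_matching s M}"
proof -
  have "{M. is_matching s M} \<subseteq> Pow (thr_edges s)" unfolding is_matching_def by auto
  thus ?thesis using edges_fin by (simp add: finite_subset)
qed

lemma match_card_le:
  assumes "is_matching s M"
  shows "2 * card M \<le> Suc (length s)"
proof -
  have sub: "M \<subseteq> thr_edges s" using assms unfolding is_matching_def by auto
  have finM: "finite M" using sub edges_fin finite_subset by blast
  have "card (\<Union>M) = sum card M"
    apply (rule card_Union_disjoint)
    using assms sub edge_props unfolding is_matching_def pairwise_def disjnt_def
    by (auto intro: edge_fin)
  also have "\<dots> = sum (\<lambda>_. 2) M" using sub edge_props by (intro sum.cong) auto
  also have "\<dots> = 2 * card M" by simp
  finally have "card (\<Union>M) = 2 * card M" .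
  moreover have "\<Union>M \<subseteq> {0..length s}" using sub edge_props by blast
  hence "card (\<Union>M) \<le> card {0..length s}" by (intro card_mono) auto
  ultimately show ?thesis by simp
qed

lemma nu_ge: "is_matching s M \<Longrightarrow> card M \<le> matching_number s"
  unfolding matching_number_def using matchings_fin by (intro Max_ge) auto

lemma nu_ex: "\<exists>M. is_matching s M \<and> card M = matching_number s"
proof -
  have "{} \<in> {M. is_matching s M}" unfolding is_matching_def by auto
  hence "matching_number s \<in> card ` {M. is_matching s M}"
    unfolding matching_number_def using matchings_fin by (intro Max_in) auto
  thus ?thesis by auto
qed

lemma nu_le: "2 * matching_number s \<le> Suc (length s)"
  using nu_ex match_card_le by metis

lemma nu_nil: "matching_number [] = 0"
  using nu_le[of "[]"] by simp

lemma nthF: "0 < v \<Longrightarrow> v \<le> Suc (length s) \<Longrightarrow> (s @ [False]) ! (v - 1) \<longleftrightarrow> v \<le> length s \<and> s ! (v - 1)"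
  by (cases "v \<le> length s") (auto simp: nth_append)

lemma adj_False: "thr_adj (s @ [False]) = thr_adj s"
proof (intro ext)
  fix u v
  show "thr_adj (s @ [False]) u v = thr_adj s u v"
    unfolding thr_adj_def using nthF[of v s] nthF[of u s] by auto
qed

lemma nu_False: "matching_number (s @ [False]) = matching_number s"
  unfolding matching_number_def is_matching_def thr_edges_def adj_False ..

lemma adj_True: "thr_adj (s @ [True]) u v \<longleftrightarrow> thr_adj s u v \<or>
   (u < v \<and> v = Suc (length s)) \<or> (v < u \<and> u = Suc (length s))"
  unfolding thr_adj_def by (auto simp: nth_append)

lemma nu_True: "matching_number (s @ [True]) =
   (if 2 * matching_number s < Suc (length s) then Suc (matching_number s) else matching_number s)"
proof -
  define N where "N = Suc (length s)"
  have sub_edges: "thr_edges s \<subseteq> thr_edges (s @ [True])"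
    unfolding thr_edges_def using adj_True by blast
  have ge: "matching_number s \<le> matching_number (s @ [True])"
  proof -
    obtain M where M: "is_matching s M" "card M = matching_number s" using nu_ex by blast
    hence "is_matching (s @ [True]) M" using sub_edges unfolding is_matching_def by auto
    thus ?thesis using nu_ge M(2) by metis
  qed
  have le: "matching_number (s @ [True]) \<le> Suc (matching_number s)"
  proof -
    obtain M where M: "is_matching (s @ [True]) M" "card M = matching_number (s @ [True])"
      using nu_ex by blast
    define M' where "M' = {e\<in>M. N \<notin> e}"
    have finM: "finite M" using M(1) edges_fin finite_subset unfolding is_matching_def by blast
    have "M' \<subseteq> thr_edges s"
    proof
      fix e assume "e \<in> M'"
      hence "e \<in> thr_edges (s @ [True])" "N \<notin> e" using M(1) unfolding M'_def is_matching_def by auto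
      then obtain u v where "e = {u, v}" "thr_adj (s @ [True]) u v" "N \<notin> e"
        unfolding thr_edges_def by auto
      thus "e \<in> thr_edges s" unfolding thr_edges_def adj_True N_def by auto
    qed
    hence m': "is_matching s M'" using M(1) unfolding is_matching_def M'_def by auto
    have "card (M - M') \<le> Suc 0"
      using finM M(1) unfolding M'_def is_matching_def
      by (subst card_le_Suc0_iff_eq) auto
    moreover have "card M = card M' + card (M - M')"
      using finM unfolding M'_def
      by (metis (no_types, lifting) card_Diff_subset card_mono add_diff_inverse_nat
          finite_subset mem_Collect_eq not_less subsetI)
    ultimately show ?thesis using nu_ge[OF m'] M(2) by linarith
  qed
  show ?thesis
  proof (cases "2 * matching_number s < Suc (length s)")
    case True
    obtain M where M: "is_matching s M" "card M = matching_number s" using nu_ex by blast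
    have sub: "M \<subseteq> thr_edges s" using M(1) unfolding is_matching_def by auto
    have finM: "finite M" using sub edges_fin finite_subset by blast
    have "card (\<Union>M) = sum card M"
      apply (rule card_Union_disjoint)
      using M(1) sub edge_props unfolding is_matching_def pairwise_def disjnt_def
      by (auto intro: edge_fin)
    also have "\<dots> = sum (\<lambda>_. 2) M" using sub edge_props by (intro sum.cong) auto
    finally have "card (\<Union>M) < card {0..length s}" using True M(2) by simp
    have finU: "finite (\<Union>M)"
      using sub edge_props finite_subset[of "\<Union>M" "{0..length s}"] by blast
    have "{0..length s} - \<Union>M \<noteq> {}"
    proof
      assume "{0..length s} - \<Union>M = {}"
      hence "{0..length s} \<subseteq> \<Union>M" by blast
      hence "card {0..length s} \<le> card (\<Union>M)" using finU by (rule card_mono[rotated])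
      thus False using \<open>card (\<Union>M) < card {0..length s}\<close> by simp
    qed
    then obtain w where w: "w \<in> {0..length s}" "w \<notin> \<Union>M" by blast
    have Nn: "\<And>e. e \<in> M \<Longrightarrow> N \<notin> e" using sub edge_props unfolding N_def by fastforce
    have ewN: "{w, N} \<in> thr_edges (s @ [True])"
      unfolding thr_edges_def using w adj_True[of s w N] unfolding N_def by auto
    have disj: "\<forall>e\<in>M. {w, N} \<inter> e = {} \<and> e \<inter> {w, N} = {}" using w Nn by auto
    have Md: "\<forall>e\<in>M. \<forall>e'\<in>M. e \<noteq> e' \<longrightarrow> e \<inter> e' = {}"
      using M(1) unfolding is_matching_def by simp
    have "is_matching (s @ [True]) (insert {w, N} M)"
      unfolding is_matching_def
    proof (intro conjI ballI impI)
      show "insert {w, N} M \<subseteq> thr_edges (s @ [True])"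
        using sub sub_edges ewN by (simp add: subset_trans)
    next
      fix e e' assume e: "e \<in> insert {w, N} M" and e': "e' \<in> insert {w, N} M" and ne: "e \<noteq> e'"
      show "e \<inter> e' = {}"
      proof (cases "e = {w, N}")
        case True
        hence "e' \<in> M" using e' ne by simp
        thus ?thesis using True disj by simp
      next
        case False
        hence eM: "e \<in> M" using e by simp
        show ?thesis
        proof (cases "e' = {w, N}")
          case True thus ?thesis using eM disj by simp
        next
          case False
          hence "e' \<in> M" using e' by simp
          thus ?thesis using eM Md ne by simp
        qed
      qed
    qed
    moreover have "{w, N} \<notin> M" using Nn by auto
    ultimately have "Suc (matching_number s) \<le> matching_number (s @ [True])"
      using nu_ge[of "s @ [True]" "insert {w, N} M"] finM M(2) by simp
    thus ?thesis using True le by simp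
  next
    case False
    have "2 * matching_number (s @ [True]) \<le> Suc (Suc (length s))"
      using nu_le[of "s @ [True]"] by simp
    thus ?thesis using False le ge by auto
  qed
qed

definition C :: "nat \<Rightarrow> nat \<Rightarrow> nat" where
  "C m k = card {s::bool list. length s = m \<and> matching_number s = k}"

definition F :: "nat \<Rightarrow> nat \<Rightarrow> nat" where
  "F m k = (if 2 * k < Suc m then Suc m choose k else if 2 * k = Suc m then m choose (m div 2) else 0)"

lemma fin_len: "finite {s::bool list. length s = m \<and> P s}"
proof -
  have "{s::bool list. length s = m \<and> P s} \<subseteq> {s. set s \<subseteq> UNIV \<and> length s = m}" by auto
  thus ?thesis using finite_lists_length_eq[of "UNIV::bool set" m] finite_subset by auto
qed

lemma split_last:
  "{s::bool list. length s = Suc m \<and> P s} =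
   (\<lambda>s. s @ [False]) ` {s. length s = m \<and> P (s @ [False])} \<union>
   (\<lambda>s. s @ [True]) ` {s. length s = m \<and> P (s @ [True])}"
proof (intro equalityI subsetI)
  fix s assume "s \<in> {s::bool list. length s = Suc m \<and> P s}"
  hence s: "length s = Suc m" "P s" by auto
  then obtain xs b where "s = xs @ [b]" by (metis length_Suc_conv rev_exhaust list.distinct(1))
  with s show "s \<in> (\<lambda>s. s @ [False]) ` {s. length s = m \<and> P (s @ [False])} \<union>
   (\<lambda>s. s @ [True]) ` {s. length s = m \<and> P (s @ [True])}" by (cases b) auto
qed auto

lemma card_split_last:
  "card {s::bool list. length s = Suc m \<and> P s} =
   card {s. length s = m \<and> P (s @ [False])} + card {s. length s = m \<and> P (s @ [True])}"
proof -
  have i: "inj (\<lambda>s::bool list. s @ [b])" for b by (auto simp: inj_def)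
  show ?thesis
    unfolding split_last
    apply (subst card_Un_disjoint)
    using fin_len apply auto[3]
    apply (subst card_image, rule inj_on_subset[OF i], simp)+
    apply simp
    done
qed

lemma C_rec: "C (Suc m) k = C m k + (if 0 < k \<and> 2 * (k - 1) < Suc m then C m (k - 1) else 0)
   + (if Suc m \<le> 2 * k then C m k else 0)"
proof -
  have "C (Suc m) k = card {s::bool list. length s = m \<and> matching_number s = k} +
     card {s::bool list. length s = m \<and> matching_number (s @ [True]) = k}"
    unfolding C_def by (subst card_split_last) (simp add: nu_False)
  also have "{s::bool list. length s = m \<and> matching_number (s @ [True]) = k} =
     {s. length s = m \<and> 2 * matching_number s < Suc m \<and> Suc (matching_number s) = k} \<union>
     {s. length s = m \<and> \<not> 2 * matching_number s < Suc m \<and> matching_number s = k}"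
    by (auto simp: nu_True)
  also have "card \<dots> = card {s::bool list. length s = m \<and> 2 * matching_number s < Suc m \<and> Suc (matching_number s) = k} +
     card {s::bool list. length s = m \<and> \<not> 2 * matching_number s < Suc m \<and> matching_number s = k}"
    by (rule card_Un_disjoint) (auto intro: fin_len)
  also have "{s::bool list. length s = m \<and> 2 * matching_number s < Suc m \<and> Suc (matching_number s) = k}
     = (if 0 < k \<and> 2 * (k - 1) < Suc m then {s. length s = m \<and> matching_number s = k - 1} else {})"
    by auto
  also have "{s::bool list. length s = m \<and> \<not> 2 * matching_number s < Suc m \<and> matching_number s = k}
     = (if Suc m \<le> 2 * k then {s. length s = m \<and> matching_number s = k} else {})"
    by auto
  finally show ?thesis unfolding C_def by simp
qed

lemma F_rec: "F (Suc m) k = F m k + (if 0 < k \<and> 2 * (k - 1) < Suc m then F m (k - 1) else 0)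
   + (if Suc m \<le> 2 * k then F m k else 0)"
proof (cases k)
  case 0 thus ?thesis by (simp add: F_def)
next
  case (Suc j)
  consider "2 * k < Suc m" | "2 * k = Suc m" | "2 * k = Suc (Suc m)" | "2 * k > Suc (Suc m)" by linarith
  thus ?thesis
  proof cases
    case 1 thus ?thesis using Suc by (simp add: F_def)
  next
    case 2
    hence m: "m = 2 * j + 1" using Suc by simp
    have sym: "(2 * j + 1) choose j = (2 * j + 1) choose (Suc j)"
      using binomial_symmetric[of j "2 * j + 1"] by simp
    have a: "F (Suc m) k = (Suc (Suc m) choose Suc j)" using 2 Suc by (simp add: F_def)
    have b: "(Suc (Suc m) choose Suc j) = (Suc m choose j) + (Suc m choose Suc j)" by simp
    have c: "(Suc m choose Suc j) = ((2 * j + 1) choose j) + ((2 * j + 1) choose (Suc j))"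
      using m by simp
    show ?thesis using a b c 2 Suc m sym by (simp add: F_def)
  next
    case 3
    hence m: "m = 2 * j" using Suc by simp
    show ?thesis using 3 Suc m by (simp add: F_def)
  next
    case 4 thus ?thesis using Suc by (simp add: F_def)
  qed
qed

lemma C_F: "C m k = F m k"
proof (induction m arbitrary: k)
  case 0
  have "{s::bool list. length s = 0 \<and> matching_number s = k} = (if k = 0 then {[]} else {})"
    by (auto simp: nu_nil)
  thus ?case by (simp add: C_def F_def)
next
  case (Suc m)
  show ?case by (simp only: C_rec F_rec Suc.IH)
qed

theorem mainTheorem7:
  fixes n k :: nat
  assumes "n \<ge> 1" and "2 * k \<le> n"
  shows "measure_pmf.prob (random_threshold_seq n) {s. matching_number s = k} =
           (if 2 * k < n then (1/2) ^ (n - 1) * real (n choose k)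
            else (1/2) ^ (n - 1) * real ((n - 1) choose ((n - 1) div 2)))"
proof -
  define m where "m = n - 1"
  have n: "n = Suc m" using assms(1) m_def by simp
  define S where "S = {s::bool list. length s = m}"
  have S: "S = {s. set s \<subseteq> UNIV \<and> length s = m}" unfolding S_def by auto
  have finS: "finite S" unfolding S by (rule finite_lists_length_eq) simp
  have cardS: "card S = 2 ^ m" unfolding S using card_lists_length_eq[of "UNIV::bool set"] by simp
  have ne: "S \<noteq> {}" using cardS by auto
  have "measure_pmf.prob (random_threshold_seq n) {s. matching_number s = k}
      = card (S \<inter> {s. matching_number s = k}) / card S"
    unfolding random_threshold_seq_def m_def[symmetric] S_def[symmetric]
    using measure_pmf_of_set[OF ne finS] by simp
  also have "S \<inter> {s. matching_number s = k} = {s. length s = m \<and> matching_number s = k}"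
    unfolding S_def by auto
  also have "card \<dots> = F m k" using C_F C_def by simp
  finally have eq: "measure_pmf.prob (random_threshold_seq n) {s. matching_number s = k}
      = real (F m k) / 2 ^ m" unfolding cardS by simp
  have h: "(1/2::real) ^ m * x = x / 2 ^ m" for x by (simp add: power_one_over)
  show ?thesis
  proof (cases "2 * k < n")
    case True
    hence "F m k = n choose k" unfolding F_def n by simp
    thus ?thesis using True eq h n by simp
  next
    case False
    hence "2 * k = n" using assms(2) by simp
    hence "F m k = (n - 1) choose ((n - 1) div 2)" unfolding F_def n by simp
    thus ?thesis using False eq h n by simp
  qed
qed

end
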